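(* Let $s\geqslant 1$ and let $1\leqslant k_i\leqslant d_i$, $i=1,\ldots,s$, be integers. Then $$n(k_1,d_1)\,n(k_2,d_2)\cdots n(k_s,d_s)\leqslant n(k_1+\cdots+k_s,\ d_1+\cdots+d_s).$$
   Context: A standard box in $\mathbb{R}^d$ is a set $K=K_1\times\cdots\times K_d$ where each $K_i\subset\mathbb{R}$ is a closed interval. For integers $1\leqslant k\leqslant d$, two standard boxes $K,L\subset\mathbb{R}^d$ are $k$-neighborly if $d-k\leqslant \dim(K\cap L)\leqslant d-1$, and a family of standard boxes is $k$-neighborly if every two distinct members are $k$-neighborly. $n(k,d)$ denotes the maximum possible cardinality of a $k$-neighborly family of standard boxes in $\mathbb{R}^d$. *)

theory Defs
  imports Complex_Main
begin

(* A standard box in R^d is represented by its factor intervals: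
   K i = (lower endpoint, upper endpoint) of the closed interval K_i, for i < d. Outside the index range
   {..<d} the representation is fixed to 'undefined', so distinct representations
   correspond exactly to distinct boxes (as point sets). *)
definition std_box :: "nat \<Rightarrow> (nat \<Rightarrow> real \<times> real) \<Rightarrow> bool" where
  "std_box d K \<longleftrightarrow> (\<forall>i<d. fst (K i) < snd (K i)) \<and> (\<forall>i\<ge>d. K i = undefined)"

(* The intersection is the product of the intervals
   [max lo_K lo_L, min hi_K hi_L]; it is empty (dimension -1) iff some factor is empty,
   and otherwise its dimension is the number of non-degenerate factors. *)
definition inter_dim :: "nat \<Rightarrow> (nat \<Rightarrow> real \<times> real) \<Rightarrow> (nat \<Rightarrow> real \<times> real) \<Rightarrow> int" where
  "inter_dim d K L =
     (if \<forall>i<d. max (fst (K i)) (fst (L i)) \<le> min (snd (K i)) (snd (L i))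
      then int (card {i. i < d \<and> max (fst (K i)) (fst (L i)) < min (snd (K i)) (snd (L i))})
      else -1)"

definition k_neighborly :: "nat \<Rightarrow> nat \<Rightarrow> (nat \<Rightarrow> real \<times> real) \<Rightarrow> (nat \<Rightarrow> real \<times> real) \<Rightarrow> bool" where
  "k_neighborly k d K L \<longleftrightarrow>
     int d - int k \<le> inter_dim d K L \<and> inter_dim d K L \<le> int d - 1"

definition k_neighborly_family :: "nat \<Rightarrow> nat \<Rightarrow> (nat \<Rightarrow> real \<times> real) set \<Rightarrow> bool" where
  "k_neighborly_family k d F \<longleftrightarrow>
     (\<forall>K\<in>F. std_box d K) \<and> (\<forall>K\<in>F. \<forall>L\<in>F. K \<noteq> L \<longrightarrow> k_neighborly k d K L)"

definition nbr :: "nat \<Rightarrow> nat \<Rightarrow> nat" where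
  "nbr k d = Max {card F | F. finite F \<and> k_neighborly_family k d F}"

end

theory Submission imports Defs begin

definition tch :: "real \<times> real \<Rightarrow> real \<times> real \<Rightarrow> bool" where
  "tch a b \<longleftrightarrow> snd a = fst b \<or> snd b = fst a"

fun gb :: "nat \<Rightarrow> nat" where "gb 0 = 1" | "gb (Suc n) = 1 + 2 * Suc n * gb n"

lemma touch_bound:
  "finite I \<Longrightarrow> card I \<le> n \<Longrightarrow> finite F \<Longrightarrow> (\<forall>K\<in>F. \<forall>i\<in>I. fst (K i) < snd (K i))
   \<Longrightarrow> (\<forall>K\<in>F. \<forall>L\<in>F. K \<noteq> L \<longrightarrow> (\<exists>i\<in>I. tch (K i) (L i))) \<Longrightarrow> card F \<le> gb n"
proof (induction n arbitrary: I F)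
  case 0
  then have "I = {}" by auto
  with 0 have "\<forall>K\<in>F. \<forall>L\<in>F. K = L" by blast
  then have "card F \<le> 1" using card_le_Suc0_iff_eq[OF 0(3)] by auto
  then show ?case by simp
next
  case (Suc n)
  show ?case
  proof (cases "F = {}")
    case True then show ?thesis by simp
  next
    case False
    then obtain A where A: "A \<in> F" by blast
    define P where "P i = {L\<in>F. fst (L i) = snd (A i)}" for i
    define M where "M i = {L\<in>F. snd (L i) = fst (A i)}" for i
    have cover: "F \<subseteq> insert A (\<Union>i\<in>I. P i \<union> M i)"
    proof
      fix L assume L: "L \<in> F"
      show "L \<in> insert A (\<Union>i\<in>I. P i \<union> M i)"
      proof (cases "L = A")
        case False
        then obtain i where i: "i \<in> I" "tch (A i) (L i)" using Suc.prems(5) A L by metis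
        then have "L \<in> P i \<union> M i" using L by (simp add: P_def M_def tch_def) (metis)
        then show ?thesis using i by blast
      qed simp
    qed
    have Pb: "card (P i) \<le> gb n" if "i \<in> I" for i
    proof (rule Suc.IH[of "I - {i}"])
      show "finite (I - {i})" using Suc.prems by auto
      show "card (I - {i}) \<le> n" using Suc.prems(2) that Suc.prems(1) by (simp add: card_Diff_singleton)
      show "finite (P i)" using Suc.prems(3) unfolding P_def by auto
      show "\<forall>K\<in>P i. \<forall>j\<in>I - {i}. fst (K j) < snd (K j)" using Suc.prems(4) unfolding P_def by auto
      show "\<forall>K\<in>P i. \<forall>L\<in>P i. K \<noteq> L \<longrightarrow> (\<exists>j\<in>I - {i}. tch (K j) (L j))"
      proof (intro ballI impI)
        fix K L assume K: "K \<in> P i" and L: "L \<in> P i" and "K \<noteq> L"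
        then obtain j where j: "j \<in> I" "tch (K j) (L j)" using Suc.prems(5) unfolding P_def by blast
        have "j \<noteq> i"
        proof
          assume "j = i"
          have "K \<in> F" "L \<in> F" using K L unfolding P_def by auto
          then have "fst (K i) < snd (K i)" "fst (L i) < snd (L i)" using Suc.prems(4) that by auto
          moreover have "fst (K i) = fst (L i)" using K L by (simp add: P_def)
          moreover have "tch (K i) (L i)" using j \<open>j = i\<close> by simp
          ultimately show False unfolding tch_def by linarith
        qed
        then show "\<exists>j\<in>I - {i}. tch (K j) (L j)" using j by blast
      qed
    qed
    have Mb: "card (M i) \<le> gb n" if "i \<in> I" for i
    proof (rule Suc.IH[of "I - {i}"])
      show "finite (I - {i})" using Suc.prems by auto
      show "card (I - {i}) \<le> n" using Suc.prems(2) that Suc.prems(1) by (simp add: card_Diff_singleton)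
      show "finite (M i)" using Suc.prems(3) unfolding M_def by auto
      show "\<forall>K\<in>M i. \<forall>j\<in>I - {i}. fst (K j) < snd (K j)" using Suc.prems(4) unfolding M_def by auto
      show "\<forall>K\<in>M i. \<forall>L\<in>M i. K \<noteq> L \<longrightarrow> (\<exists>j\<in>I - {i}. tch (K j) (L j))"
      proof (intro ballI impI)
        fix K L assume K: "K \<in> M i" and L: "L \<in> M i" and "K \<noteq> L"
        then obtain j where j: "j \<in> I" "tch (K j) (L j)" using Suc.prems(5) unfolding M_def by blast
        have "j \<noteq> i"
        proof
          assume "j = i"
          have "K \<in> F" "L \<in> F" using K L unfolding M_def by auto
          then have "fst (K i) < snd (K i)" "fst (L i) < snd (L i)" using Suc.prems(4) that by auto
          moreover have "snd (K i) = snd (L i)" using K L by (simp add: M_def)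
          moreover have "tch (K i) (L i)" using j \<open>j = i\<close> by simp
          ultimately show False unfolding tch_def by linarith
        qed
        then show "\<exists>j\<in>I - {i}. tch (K j) (L j)" using j by blast
      qed
    qed
    have fin: "finite (\<Union>i\<in>I. P i \<union> M i)" using Suc.prems(1,3) unfolding P_def M_def by auto
    have "card F \<le> card (insert A (\<Union>i\<in>I. P i \<union> M i))"
      by (rule card_mono) (use fin cover in auto)
    also have "\<dots> \<le> Suc (card (\<Union>i\<in>I. P i \<union> M i))" by (simp add: card_insert_if fin)
    also have "card (\<Union>i\<in>I. P i \<union> M i) \<le> (\<Sum>i\<in>I. card (P i \<union> M i))" by (rule card_UN_le) (use Suc.prems in auto)
    also have "\<dots> \<le> (\<Sum>i\<in>I. 2 * gb n)"
    proof (rule sum_mono)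
      fix i assume "i \<in> I"
      then show "card (P i \<union> M i) \<le> 2 * gb n" using card_Un_le[of "P i" "M i"] Pb Mb by fastforce
    qed
    also have "\<dots> = card I * (2 * gb n)" by simp
    also have "\<dots> \<le> Suc n * (2 * gb n)" by (rule mult_le_mono1) (use Suc.prems(2) in simp)
    finally show ?thesis by simp
  qed
qed


lemma tch_lemma:
  fixes a b :: "real \<times> real"
  assumes "fst a < snd a" "fst b < snd b" "max (fst a) (fst b) = min (snd a) (snd b)"
  shows "tch a b"
proof (cases "fst a \<le> fst b")
  case True
  then have "fst b = min (snd a) (snd b)" using assms(3) by (simp add: max_def)
  then show ?thesis using assms(2) unfolding tch_def min_def by (auto split: if_splits)
next
  case False
  then have "fst a = min (snd a) (snd b)" using assms(3) by (simp add: max_def)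
  then show ?thesis using assms(1) unfolding tch_def min_def by (auto split: if_splits)
qed

lemma touch_of_nbr:
  assumes "std_box d K" "std_box d L" "k \<le> d" "k_neighborly k d K L"
  shows "\<exists>i\<in>{..<d}. tch (K i) (L i)"
proof -
  let ?C = "\<forall>i<d. max (fst (K i)) (fst (L i)) \<le> min (snd (K i)) (snd (L i))"
  let ?S = "{i. i < d \<and> max (fst (K i)) (fst (L i)) < min (snd (K i)) (snd (L i))}"
  have ge: "int d - int k \<le> inter_dim d K L" and le: "inter_dim d K L \<le> int d - 1"
    using assms(4) unfolding k_neighborly_def by auto
  have C: ?C
  proof (rule ccontr)
    assume "\<not> ?C"
    then have "inter_dim d K L = -1" unfolding inter_dim_def by simp
    then show False using ge assms(3) by simp
  qed
  then have "inter_dim d K L = int (card ?S)" unfolding inter_dim_def by simp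
  with le have lt: "card ?S < d" by linarith
  have ne: "?S \<noteq> {..<d}"
  proof
    assume "?S = {..<d}"
    then have "card ?S = d" by simp
    with lt show False by simp
  qed
  have sub: "?S \<subseteq> {..<d}" by blast
  obtain i where i: "i < d" "i \<notin> ?S" using ne sub by blast
  have "fst (K i) < snd (K i)" "fst (L i) < snd (L i)" using assms(1,2) i(1) unfolding std_box_def by auto
  moreover have "max (fst (K i)) (fst (L i)) \<le> min (snd (K i)) (snd (L i))" using C i(1) by auto
  moreover have "\<not> max (fst (K i)) (fst (L i)) < min (snd (K i)) (snd (L i))" using i by blast
  ultimately have "tch (K i) (L i)" using tch_lemma by (meson order_le_less)
  then show ?thesis using i(1) by auto
qed

lemma fam_bound:
  assumes "finite F" "k_neighborly_family k d F" "k \<le> d"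
  shows "card F \<le> gb d"
proof (rule touch_bound[of "{..<d}"])
  show "finite {..<d}" by simp
  show "card {..<d} \<le> d" by simp
  show "finite F" by fact
  show "\<forall>K\<in>F. \<forall>i\<in>{..<d}. fst (K i) < snd (K i)"
    using assms(2) unfolding k_neighborly_family_def std_box_def by auto
  show "\<forall>K\<in>F. \<forall>L\<in>F. K \<noteq> L \<longrightarrow> (\<exists>i\<in>{..<d}. tch (K i) (L i))"
    using assms(2,3) touch_of_nbr unfolding k_neighborly_family_def by blast
qed

definition unitbox :: "nat \<Rightarrow> nat \<Rightarrow> real \<times> real" where
  "unitbox d = (\<lambda>i. if i < d then (0, 1) else undefined)"

lemma nbr_facts:
  assumes "k \<le> d"
  shows "\<exists>F. finite F \<and> k_neighborly_family k d F \<and> card F = nbr k d"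
    and "\<And>F. finite F \<Longrightarrow> k_neighborly_family k d F \<Longrightarrow> card F \<le> nbr k d"
    and "1 \<le> nbr k d"
proof -
  let ?S = "{card F | F. finite F \<and> k_neighborly_family k d F}"
  have fin: "finite ?S"
    by (rule finite_subset[of _ "{..gb d}"]) (use fam_bound assms in auto)
  have u: "k_neighborly_family k d {unitbox d}"
    unfolding k_neighborly_family_def std_box_def unitbox_def by auto
  then have one: "1 \<in> ?S" by force
  then have ne: "?S \<noteq> {}" by auto
  have "nbr k d \<in> ?S" unfolding nbr_def using Max_in[OF fin ne] .
  then show "\<exists>F. finite F \<and> k_neighborly_family k d F \<and> card F = nbr k d" by auto
  show "card F \<le> nbr k d" if "finite F" "k_neighborly_family k d F" for F
    unfolding nbr_def by (rule Max_ge[OF fin]) (use that in auto)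
  show "1 \<le> nbr k d" unfolding nbr_def by (rule Max_ge[OF fin one])
qed

definition cmb :: "nat \<Rightarrow> nat \<Rightarrow> (nat \<Rightarrow> real \<times> real) \<Rightarrow> (nat \<Rightarrow> real \<times> real) \<Rightarrow> nat \<Rightarrow> real \<times> real" where
  "cmb d1 d2 K L = (\<lambda>i. if i < d1 then K i else if i < d1 + d2 then L (i - d1) else undefined)"

lemma card_split:
  fixes a b :: nat
  shows "card {i. i < a + b \<and> P i} = card {i. i < a \<and> P i} + card {j. j < b \<and> P (a + j)}"
proof -
  have eq: "{i. i < a + b \<and> P i} = {i. i < a \<and> P i} \<union> (\<lambda>j. a + j) ` {j. j < b \<and> P (a + j)}"
  proof (rule set_eqI)
    fix i
    show "i \<in> {i. i < a + b \<and> P i} \<longleftrightarrow> i \<in> {i. i < a \<and> P i} \<union> (\<lambda>j. a + j) ` {j. j < b \<and> P (a + j)}"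
    proof (cases "i < a")
      case False
      then have e: "i = a + (i - a)" by simp
      show ?thesis
      proof
        assume "i \<in> {i. i < a + b \<and> P i}"
        then have "i - a \<in> {j. j < b \<and> P (a + j)}" using e False by auto
        then show "i \<in> {i. i < a \<and> P i} \<union> (\<lambda>j. a + j) ` {j. j < b \<and> P (a + j)}" using e by blast
      next
        assume "i \<in> {i. i < a \<and> P i} \<union> (\<lambda>j. a + j) ` {j. j < b \<and> P (a + j)}"
        then show "i \<in> {i. i < a + b \<and> P i}" using False by auto
      qed
    qed auto
  qed
  have "card ({i. i < a \<and> P i} \<union> (\<lambda>j. a + j) ` {j. j < b \<and> P (a + j)})
      = card {i. i < a \<and> P i} + card ((\<lambda>j. a + j) ` {j. j < b \<and> P (a + j)})"
    by (rule card_Un_disjoint) auto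
  also have "card ((\<lambda>j. a + j) ` {j. j < b \<and> P (a + j)}) = card {j. j < b \<and> P (a + j)}"
    by (rule card_image) (simp add: inj_on_def)
  finally show ?thesis using eq by simp
qed

lemma inter_dim_nonneg:
  assumes "0 \<le> inter_dim d K L"
  shows "\<forall>i<d. max (fst (K i)) (fst (L i)) \<le> min (snd (K i)) (snd (L i))"
    and "inter_dim d K L = int (card {i. i < d \<and> max (fst (K i)) (fst (L i)) < min (snd (K i)) (snd (L i))})"
proof -
  show c: "\<forall>i<d. max (fst (K i)) (fst (L i)) \<le> min (snd (K i)) (snd (L i))"
  proof (rule ccontr)
    assume "\<not> ?thesis"
    then have "inter_dim d K L = -1" unfolding inter_dim_def by simp
    with assms show False by simp
  qed
  then show "inter_dim d K L = int (card {i. i < d \<and> max (fst (K i)) (fst (L i)) < min (snd (K i)) (snd (L i))})"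
    unfolding inter_dim_def by simp
qed

lemma inter_dim_cmb:
  assumes a: "0 \<le> inter_dim d1 K K'" and b: "0 \<le> inter_dim d2 L L'"
  shows "inter_dim (d1 + d2) (cmb d1 d2 K L) (cmb d1 d2 K' L') = inter_dim d1 K K' + inter_dim d2 L L'"
proof -
  let ?P = "\<lambda>i. max (fst (cmb d1 d2 K L i)) (fst (cmb d1 d2 K' L' i)) < min (snd (cmb d1 d2 K L i)) (snd (cmb d1 d2 K' L' i))"
  note ca = inter_dim_nonneg[OF a] and cb = inter_dim_nonneg[OF b]
  have C: "\<forall>i<d1 + d2. max (fst (cmb d1 d2 K L i)) (fst (cmb d1 d2 K' L' i)) \<le> min (snd (cmb d1 d2 K L i)) (snd (cmb d1 d2 K' L' i))"
  proof (intro allI impI)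
    fix i assume i: "i < d1 + d2"
    show "max (fst (cmb d1 d2 K L i)) (fst (cmb d1 d2 K' L' i)) \<le> min (snd (cmb d1 d2 K L i)) (snd (cmb d1 d2 K' L' i))"
    proof (cases "i < d1")
      case True then show ?thesis using ca(1) by (simp add: cmb_def)
    next
      case False
      then have "i - d1 < d2" using i by simp
      then show ?thesis using cb(1) False i by (simp add: cmb_def)
    qed
  qed
  have "inter_dim (d1 + d2) (cmb d1 d2 K L) (cmb d1 d2 K' L') = int (card {i. i < d1 + d2 \<and> ?P i})"
    unfolding inter_dim_def using C by simp
  also have "card {i. i < d1 + d2 \<and> ?P i} = card {i. i < d1 \<and> ?P i} + card {j. j < d2 \<and> ?P (d1 + j)}"
    by (rule card_split)
  also have "{i. i < d1 \<and> ?P i} = {i. i < d1 \<and> max (fst (K i)) (fst (K' i)) < min (snd (K i)) (snd (K' i))}"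
    by (auto simp: cmb_def)
  also have "{j. j < d2 \<and> ?P (d1 + j)} = {i. i < d2 \<and> max (fst (L i)) (fst (L' i)) < min (snd (L i)) (snd (L' i))}"
    by (auto simp: cmb_def)
  finally show ?thesis using ca(2) cb(2) by simp
qed

lemma inter_dim_self:
  assumes "std_box d K" shows "inter_dim d K K = int d"
proof -
  have "{i. i < d \<and> max (fst (K i)) (fst (K i)) < min (snd (K i)) (snd (K i))} = {..<d}"
    using assms unfolding std_box_def by auto
  moreover have "\<forall>i<d. max (fst (K i)) (fst (K i)) \<le> min (snd (K i)) (snd (K i))"
    using assms unfolding std_box_def by auto
  ultimately show ?thesis unfolding inter_dim_def by simp
qed

lemma cmb_inj:
  assumes "std_box d1 K" "std_box d1 K'" "std_box d2 L" "std_box d2 L'"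
    and "cmb d1 d2 K L = cmb d1 d2 K' L'"
  shows "K = K' \<and> L = L'"
proof
  show "K = K'"
  proof
    fix i show "K i = K' i"
    proof (cases "i < d1")
      case True then show ?thesis using fun_cong[OF assms(5), of i] by (simp add: cmb_def)
    next
      case False then show ?thesis using assms(1,2) unfolding std_box_def by simp
    qed
  qed
  show "L = L'"
  proof
    fix i show "L i = L' i"
    proof (cases "i < d2")
      case True then show ?thesis using fun_cong[OF assms(5), of "d1 + i"] by (simp add: cmb_def)
    next
      case False then show ?thesis using assms(3,4) unfolding std_box_def by simp
    qed
  qed
qed

lemma cmb_std:
  assumes "std_box d1 K" "std_box d2 L"
  shows "std_box (d1 + d2) (cmb d1 d2 K L)"
  using assms unfolding std_box_def cmb_def by auto

lemma nbr_dim: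
  assumes "std_box d K" "std_box d L" "K \<noteq> L" "k_neighborly k d K L" "k \<le> d"
  shows "0 \<le> inter_dim d K L"
  using assms(4,5) unfolding k_neighborly_def by simp

lemma binary:
  assumes "k1 \<le> d1" "k2 \<le> d2"
  shows "nbr k1 d1 * nbr k2 d2 \<le> nbr (k1 + k2) (d1 + d2)"
proof -
  obtain F1 where F1: "finite F1" "k_neighborly_family k1 d1 F1" "card F1 = nbr k1 d1"
    using nbr_facts(1)[OF assms(1)] by blast
  obtain F2 where F2: "finite F2" "k_neighborly_family k2 d2 F2" "card F2 = nbr k2 d2"
    using nbr_facts(1)[OF assms(2)] by blast
  define f where "f = (\<lambda>(K, L). cmb d1 d2 K L)"
  define G where "G = f ` (F1 \<times> F2)"
  have s1: "\<And>K. K \<in> F1 \<Longrightarrow> std_box d1 K" using F1(2) unfolding k_neighborly_family_def by auto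
  have s2: "\<And>K. K \<in> F2 \<Longrightarrow> std_box d2 K" using F2(2) unfolding k_neighborly_family_def by auto
  have inj: "inj_on f (F1 \<times> F2)"
  proof (rule inj_onI)
    fix x y assume x: "x \<in> F1 \<times> F2" and y: "y \<in> F1 \<times> F2" and "f x = f y"
    obtain K L where xe: "x = (K, L)" by (cases x)
    obtain K' L' where ye: "y = (K', L')" by (cases y)
    have "cmb d1 d2 K L = cmb d1 d2 K' L'" using \<open>f x = f y\<close> xe ye by (simp add: f_def)
    moreover have "std_box d1 K" "std_box d1 K'" "std_box d2 L" "std_box d2 L'" using x y xe ye s1 s2 by auto
    ultimately show "x = y" using cmb_inj xe ye by blast
  qed
  have cardG: "card G = nbr k1 d1 * nbr k2 d2"
    unfolding G_def using card_image[OF inj] F1(3) F2(3) by (simp add: card_cartesian_product)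
  have finG: "finite G" unfolding G_def using F1(1) F2(1) by simp
  have famG: "k_neighborly_family (k1 + k2) (d1 + d2) G"
    unfolding k_neighborly_family_def
  proof (intro conjI ballI impI)
    fix X assume "X \<in> G"
    then show "std_box (d1 + d2) X" unfolding G_def f_def using cmb_std s1 s2 by auto
  next
    fix X Y assume X: "X \<in> G" and Y: "Y \<in> G" and XY: "X \<noteq> Y"
    obtain K L where KL: "K \<in> F1" "L \<in> F2" "X = cmb d1 d2 K L" using X unfolding G_def f_def by auto
    obtain K' L' where KL': "K' \<in> F1" "L' \<in> F2" "Y = cmb d1 d2 K' L'" using Y unfolding G_def f_def by auto
    have ne: "K \<noteq> K' \<or> L \<noteq> L'" using XY KL KL' by auto
    have a: "int d1 - int k1 \<le> inter_dim d1 K K' \<and> inter_dim d1 K K' \<le> int d1 \<and> (K \<noteq> K' \<longrightarrow> inter_dim d1 K K' \<le> int d1 - 1)"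
    proof (cases "K = K'")
      case True then show ?thesis using inter_dim_self s1 KL by simp
    next
      case False then show ?thesis using F1(2) KL KL' unfolding k_neighborly_family_def k_neighborly_def by fastforce
    qed
    have b: "int d2 - int k2 \<le> inter_dim d2 L L' \<and> inter_dim d2 L L' \<le> int d2 \<and> (L \<noteq> L' \<longrightarrow> inter_dim d2 L L' \<le> int d2 - 1)"
    proof (cases "L = L'")
      case True then show ?thesis using inter_dim_self s2 KL by simp
    next
      case False then show ?thesis using F2(2) KL KL' unfolding k_neighborly_family_def k_neighborly_def by fastforce
    qed
    have eq: "inter_dim (d1 + d2) X Y = inter_dim d1 K K' + inter_dim d2 L L'"
      unfolding KL(3) KL'(3) by (rule inter_dim_cmb) (use a b assms in auto)
    show "k_neighborly (k1 + k2) (d1 + d2) X Y"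
      unfolding k_neighborly_def eq using a b ne by auto
  qed
  have "card G \<le> nbr (k1 + k2) (d1 + d2)"
    by (rule nbr_facts(2)) (use assms finG famG in auto)
  then show ?thesis using cardG by simp
qed

theorem proposition2:
  fixes s :: nat and k d :: "nat \<Rightarrow> nat"
  assumes "s \<ge> 1"
    and "\<And>i. i < s \<Longrightarrow> 1 \<le> k i \<and> k i \<le> d i"
  shows "(\<Prod>i<s. nbr (k i) (d i)) \<le> nbr (\<Sum>i<s. k i) (\<Sum>i<s. d i)"
proof -
  have "(\<forall>i<s. k i \<le> d i) \<longrightarrow> (\<Prod>i<s. nbr (k i) (d i)) \<le> nbr (\<Sum>i<s. k i) (\<Sum>i<s. d i)" for s
  proof (induction s)
    case 0
    then show ?case using nbr_facts(3)[of 0 0] by simp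
  next
    case (Suc s)
    show ?case
    proof
      assume h: "\<forall>i<Suc s. k i \<le> d i"
      have le: "(\<Sum>i<s. k i) \<le> (\<Sum>i<s. d i)" by (rule sum_mono) (use h in auto)
      have "(\<Prod>i<Suc s. nbr (k i) (d i)) = (\<Prod>i<s. nbr (k i) (d i)) * nbr (k s) (d s)" by simp
      also have "\<dots> \<le> nbr (\<Sum>i<s. k i) (\<Sum>i<s. d i) * nbr (k s) (d s)"
        using Suc.IH h by (intro mult_le_mono1) auto
      also have "\<dots> \<le> nbr ((\<Sum>i<s. k i) + k s) ((\<Sum>i<s. d i) + d s)"
        by (rule binary) (use le h in auto)
      finally show "(\<Prod>i<Suc s. nbr (k i) (d i)) \<le> nbr (\<Sum>i<Suc s. k i) (\<Sum>i<Suc s. d i)" by simp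
    qed
  qed
  then show ?thesis using assms(2) by blast
qed

end
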